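(* Let $\ell\ge 2$ and let $G$ be a bipartite graph with an edge $uv\in E(G)$. Suppose $G$ has $\ell$ pairwise vertex-disjoint edges $w_iz_i$ ($1\le i\le \ell$) such that $w_1,\dots,w_\ell\in N(v)\setminus\{u\}$, $z_1,\dots,z_\ell\in N(u)\setminus\{v\}$, and $(w_{i-1},z_{i-1},w_i,z_i)$ is rich for every $2\le i\le\ell$. Then $G$ contains a copy of $C_{2\ell}^{\square}$.
   Context: For distinct vertices $w,z,w',z'$ of $G$, the $4$-tuple $(w,z,w',z')$ is rich if $wz,w'z'\in E(G)$ and there are at least $4\ell$ pairwise vertex-disjoint edges $xy\in E(G)$ with $wx,xw',zy,yz'\in E(G)$. $N(v)$ is the neighbourhood of $v$. $C_{2\ell}^{\square}$ consists of two vertex-disjoint $2\ell$-cycles $a_1\cdots a_{2\ell}a_1$, $b_1\cdots b_{2\ell}b_1$ plus the edges $a_ib_i$. *)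

theory Defs
  imports Main
begin

definition sgraph :: "'a set \<Rightarrow> ('a \<Rightarrow> 'a \<Rightarrow> bool) \<Rightarrow> bool" where
  "sgraph V E \<longleftrightarrow> finite V \<and>
     (\<forall>x y. E x y \<longrightarrow> x \<in> V \<and> y \<in> V \<and> x \<noteq> y \<and> E y x)"

definition bipartite :: "'a set \<Rightarrow> ('a \<Rightarrow> 'a \<Rightarrow> bool) \<Rightarrow> bool" where
  "bipartite V E \<longleftrightarrow> (\<exists>A B. A \<inter> B = {} \<and> A \<union> B = V \<and>
     (\<forall>x y. E x y \<longrightarrow> (x \<in> A \<and> y \<in> B) \<or> (x \<in> B \<and> y \<in> A)))"

definition nbhd :: "('a \<Rightarrow> 'a \<Rightarrow> bool) \<Rightarrow> 'a \<Rightarrow> 'a set" where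
  "nbhd E v = {x. E v x}"

definition rich :: "nat \<Rightarrow> ('a \<Rightarrow> 'a \<Rightarrow> bool) \<Rightarrow> 'a \<Rightarrow> 'a \<Rightarrow> 'a \<Rightarrow> 'a \<Rightarrow> bool" where
  "rich l E w z w' z' \<longleftrightarrow> distinct [w, z, w', z'] \<and> E w z \<and> E w' z' \<and>
     (\<exists>M :: ('a \<times> 'a) set. finite M \<and> card M \<ge> 4 * l \<and>
        (\<forall>(x, y) \<in> M. E x y \<and> E w x \<and> E x w' \<and> E z y \<and> E y z') \<and>
        (\<forall>p \<in> M. \<forall>q \<in> M. p \<noteq> q \<longrightarrow> {fst p, snd p} \<inter> {fst q, snd q} = {}))"

text \<open>G contains a copy of the prism C_{2l}^square: two vertex-disjoint 2l-cycles
a_0...a_{2l-1}, b_0...b_{2l-1} plus the rungs a_i b_i (indices mod 2l), embedded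
injectively as a (not necessarily induced) subgraph.\<close>
definition has_prism_copy :: "nat \<Rightarrow> 'a set \<Rightarrow> ('a \<Rightarrow> 'a \<Rightarrow> bool) \<Rightarrow> bool" where
  "has_prism_copy l V E \<longleftrightarrow> (\<exists>a b :: nat \<Rightarrow> 'a.
     inj_on a {..<2*l} \<and> inj_on b {..<2*l} \<and> a ` {..<2*l} \<inter> b ` {..<2*l} = {} \<and>
     a ` {..<2*l} \<subseteq> V \<and> b ` {..<2*l} \<subseteq> V \<and>
     (\<forall>i < 2*l. E (a i) (a (Suc i mod (2*l))) \<and> E (b i) (b (Suc i mod (2*l))) \<and>
                E (a i) (b i)))"

end

theory Submission
  imports Defs
begin

lemma avoid:
  assumes "finite M" "finite S" "card S < card M"
    and "\<forall>p\<in>M. \<forall>q\<in>M. p \<noteq> q \<longrightarrow> {fst p, snd p} \<inter> {fst q, snd q} = {}"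
  shows "\<exists>q\<in>M. fst q \<notin> S \<and> snd q \<notin> S"
proof (rule ccontr)
  assume H: "\<not> ?thesis"
  define f where "f q = (if fst q \<in> S then fst q else snd q)" for q :: "'a \<times> 'a"
  have "inj_on f M"
  proof (rule inj_onI)
    fix p q assume "p \<in> M" "q \<in> M" "f p = f q"
    then show "p = q" using assms(4) unfolding f_def by (auto split: if_splits)
  qed
  moreover have "f ` M \<subseteq> S" using H unfolding f_def by auto
  ultimately have "card M \<le> card S" using card_inj_on_le assms(2) by blast
  then show False using assms(3) by simp
qed

lemma pick:
  fixes P :: "nat \<Rightarrow> 'a \<times> 'a \<Rightarrow> bool"
  assumes "finite F" "card F \<le> 2*l+2"
    and "\<forall>i\<in>{2..l}. \<exists>M. finite M \<and> card M \<ge> 4*l \<and> (\<forall>q\<in>M. P i q) \<and>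
        (\<forall>p\<in>M. \<forall>q\<in>M. p \<noteq> q \<longrightarrow> {fst p, snd p} \<inter> {fst q, snd q} = {})"
  shows "\<exists>p. \<forall>i\<in>{2..l}. P i (p i) \<and> fst (p i) \<notin> F \<and> snd (p i) \<notin> F \<and>
          (\<forall>j\<in>{2..l}. i \<noteq> j \<longrightarrow> {fst (p i), snd (p i)} \<inter> {fst (p j), snd (p j)} = {})"
proof -
  have "\<forall>n. n \<le> l \<longrightarrow> (\<exists>p. \<forall>i\<in>{2..n}. P i (p i) \<and> fst (p i) \<notin> F \<and> snd (p i) \<notin> F \<and>
          (\<forall>j\<in>{2..n}. i \<noteq> j \<longrightarrow> {fst (p i), snd (p i)} \<inter> {fst (p j), snd (p j)} = {}))"
  proof (intro allI)
    fix n show "n \<le> l \<longrightarrow> (\<exists>p. \<forall>i\<in>{2..n}. P i (p i) \<and> fst (p i) \<notin> F \<and> snd (p i) \<notin> F \<and>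
          (\<forall>j\<in>{2..n}. i \<noteq> j \<longrightarrow> {fst (p i), snd (p i)} \<inter> {fst (p j), snd (p j)} = {}))"
    proof (induction n)
      case 0 then show ?case by auto
    next
      case (Suc n)
      show ?case
      proof
        assume le: "Suc n \<le> l"
        then obtain p where p: "\<forall>i\<in>{2..n}. P i (p i) \<and> fst (p i) \<notin> F \<and> snd (p i) \<notin> F \<and>
          (\<forall>j\<in>{2..n}. i \<noteq> j \<longrightarrow> {fst (p i), snd (p i)} \<inter> {fst (p j), snd (p j)} = {})"
          using Suc by auto
        show "\<exists>p. \<forall>i\<in>{2..Suc n}. P i (p i) \<and> fst (p i) \<notin> F \<and> snd (p i) \<notin> F \<and>
          (\<forall>j\<in>{2..Suc n}. i \<noteq> j \<longrightarrow> {fst (p i), snd (p i)} \<inter> {fst (p j), snd (p j)} = {})"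
        proof (cases "Suc n < 2")
          case True then show ?thesis by auto
        next
          case False
          then have "Suc n \<in> {2..l}" using le by auto
          then obtain M where M: "finite M" "card M \<ge> 4*l" "\<forall>q\<in>M. P (Suc n) q"
            "\<forall>p\<in>M. \<forall>q\<in>M. p \<noteq> q \<longrightarrow> {fst p, snd p} \<inter> {fst q, snd q} = {}"
            using assms(3) by blast
          define S where "S = F \<union> (\<Union>i\<in>{2..n}. {fst (p i), snd (p i)})"
          have fS: "finite S" using assms(1) unfolding S_def by auto
          have "card (\<Union>i\<in>{2..n}. {fst (p i), snd (p i)}) \<le> (\<Sum>i\<in>{2..n}. card {fst (p i), snd (p i)})"
            by (rule card_UN_le) simp
          also have "\<dots> \<le> (\<Sum>i\<in>{2..n}. 2)"
            by (rule sum_mono) (simp add: card_insert_le_m1)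
          also have "\<dots> = 2 * (n - 1)" by simp
          finally have c1: "card (\<Union>i\<in>{2..n}. {fst (p i), snd (p i)}) \<le> 2 * (n - 1)" .
          have "card S \<le> card F + card (\<Union>i\<in>{2..n}. {fst (p i), snd (p i)})"
            unfolding S_def by (rule card_Un_le)
          also have "\<dots> < 4 * l" using c1 assms(2) le False by linarith
          finally have "card S < card M" using M(2) by linarith
          then obtain q where q: "q \<in> M" "fst q \<notin> S" "snd q \<notin> S"
            using avoid[OF M(1) fS _ M(4)] by blast
          show ?thesis
          proof (intro exI[of _ "p(Suc n := q)"] ballI conjI impI)
            fix i assume i: "i \<in> {2..Suc n}"
            show "P i ((p(Suc n := q)) i)" using p M(3) q i by (cases "i = Suc n") auto
            show "fst ((p(Suc n := q)) i) \<notin> F" using p q i S_def by (cases "i = Suc n") auto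
            show "snd ((p(Suc n := q)) i) \<notin> F" using p q i S_def by (cases "i = Suc n") auto
            fix j assume j: "j \<in> {2..Suc n}" "i \<noteq> j"
            show "{fst ((p(Suc n := q)) i), snd ((p(Suc n := q)) i)} \<inter> {fst ((p(Suc n := q)) j), snd ((p(Suc n := q)) j)} = {}"
            proof (cases "i = Suc n")
              case True
              then have "j \<in> {2..n}" using j by auto
              then have "fst (p j) \<in> S" "snd (p j) \<in> S" unfolding S_def by auto
              then show ?thesis using True j q by auto
            next
              case iF: False
              then have ii: "i \<in> {2..n}" using i by auto
              show ?thesis
              proof (cases "j = Suc n")
                case True
                have "fst (p i) \<in> S" "snd (p i) \<in> S" using ii unfolding S_def by auto
                then show ?thesis using True iF q by auto
              next
                case False
                then have "j \<in> {2..n}" using j by auto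
                then show ?thesis using p ii j iF False by simp
              qed
            qed
          qed
        qed
      qed
    qed
  qed
  then show ?thesis by auto
qed

theorem lemma5p5:
  fixes V :: "'a set" and E :: "'a \<Rightarrow> 'a \<Rightarrow> bool" and l :: nat
    and u v :: 'a and w z :: "nat \<Rightarrow> 'a"
  assumes "l \<ge> 2"
    and "sgraph V E" and "bipartite V E"
    and "E u v"
    and "\<forall>i \<in> {1..l}. E (w i) (z i)"
    and "\<forall>i \<in> {1..l}. \<forall>j \<in> {1..l}. i \<noteq> j \<longrightarrow> {w i, z i} \<inter> {w j, z j} = {}"
    and "\<forall>i \<in> {1..l}. w i \<in> nbhd E v - {u}"
    and "\<forall>i \<in> {1..l}. z i \<in> nbhd E u - {v}"
    and "\<forall>i \<in> {2..l}. rich l E (w (i - 1)) (z (i - 1)) (w i) (z i)"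
  shows "has_prism_copy l V E"
proof -
  have sg: "\<And>x y. E x y \<Longrightarrow> x \<in> V \<and> y \<in> V \<and> x \<noteq> y \<and> E y x"
    using assms(2) unfolding sgraph_def by blast
  define F where "F = {u, v} \<union> w ` {1..l} \<union> z ` {1..l}"
  have fF: "finite F" unfolding F_def by auto
  have "card F \<le> card {u, v} + card (w ` {1..l}) + card (z ` {1..l})"
    unfolding F_def
    by (metis (no_types, lifting) add_le_mono1 card_Un_le order_trans)
  also have "\<dots> \<le> 2 + l + l"
    by (intro add_mono card_image_le[THEN order_trans]) (auto simp: card_insert_le_m1)
  finally have cF: "card F \<le> 2*l+2" by simp
  define P where "P i q = (E (fst q) (snd q) \<and> E (w (i-1)) (fst q) \<and> E (fst q) (w i) \<and>
     E (z (i-1)) (snd q) \<and> E (snd q) (z i))" for i q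
  have "\<forall>i\<in>{2..l}. \<exists>M. finite M \<and> card M \<ge> 4*l \<and> (\<forall>q\<in>M. P i q) \<and>
        (\<forall>p\<in>M. \<forall>q\<in>M. p \<noteq> q \<longrightarrow> {fst p, snd p} \<inter> {fst q, snd q} = {})"
  proof
    fix i assume "i \<in> {2..l}"
    then have "rich l E (w (i - 1)) (z (i - 1)) (w i) (z i)" using assms(9) by blast
    then obtain M where "finite M" "card M \<ge> 4 * l"
        "\<forall>(x, y) \<in> M. E x y \<and> E (w (i-1)) x \<and> E x (w i) \<and> E (z (i-1)) y \<and> E y (z i)"
        "\<forall>p \<in> M. \<forall>q \<in> M. p \<noteq> q \<longrightarrow> {fst p, snd p} \<inter> {fst q, snd q} = {}"
      unfolding rich_def by blast
    then show "\<exists>M. finite M \<and> card M \<ge> 4*l \<and> (\<forall>q\<in>M. P i q) \<and>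
        (\<forall>p\<in>M. \<forall>q\<in>M. p \<noteq> q \<longrightarrow> {fst p, snd p} \<inter> {fst q, snd q} = {})"
      unfolding P_def by (intro exI[of _ M]) auto
  qed
  then obtain p where p: "\<forall>i\<in>{2..l}. P i (p i) \<and> fst (p i) \<notin> F \<and> snd (p i) \<notin> F \<and>
          (\<forall>j\<in>{2..l}. i \<noteq> j \<longrightarrow> {fst (p i), snd (p i)} \<inter> {fst (p j), snd (p j)} = {})"
    using pick[OF fF cF] by blast
  define x where "x i = fst (p i)" for i
  define y where "y i = snd (p i)" for i
  have Px: "\<And>i. i \<in> {2..l} \<Longrightarrow> E (x i) (y i) \<and> E (w (i-1)) (x i) \<and> E (x i) (w i) \<and>
     E (z (i-1)) (y i) \<and> E (y i) (z i)" using p unfolding P_def x_def y_def by blast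
  have xF: "\<And>i. i \<in> {2..l} \<Longrightarrow> x i \<notin> F \<and> y i \<notin> F" using p unfolding x_def y_def by blast
  have xx: "\<And>i j. i \<in> {2..l} \<Longrightarrow> j \<in> {2..l} \<Longrightarrow> i \<noteq> j \<Longrightarrow>
      x i \<noteq> x j \<and> x i \<noteq> y j \<and> y i \<noteq> y j" using p unfolding x_def y_def by blast
  have xy: "\<And>i. i \<in> {2..l} \<Longrightarrow> x i \<noteq> y i" using Px sg by blast
  have wuv: "\<And>i. i \<in> {1..l} \<Longrightarrow> E v (w i) \<and> w i \<noteq> u \<and> E u (z i) \<and> z i \<noteq> v"
    using assms(7,8) unfolding nbhd_def by auto
  have wz: "\<And>i. i \<in> {1..l} \<Longrightarrow> E (w i) (z i)" using assms(5) by blast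
  have ww: "\<And>i j. i \<in> {1..l} \<Longrightarrow> j \<in> {1..l} \<Longrightarrow> i \<noteq> j \<Longrightarrow>
      w i \<noteq> w j \<and> w i \<noteq> z j \<and> z i \<noteq> z j" using assms(6) by blast
  have xF': "\<And>i j. i \<in> {2..l} \<Longrightarrow> j \<in> {1..l} \<Longrightarrow> x i \<noteq> u \<and> x i \<noteq> v \<and> y i \<noteq> u \<and> y i \<noteq> v
     \<and> x i \<noteq> w j \<and> x i \<noteq> z j \<and> y i \<noteq> w j \<and> y i \<noteq> z j"
    using xF unfolding F_def by blast
  have uv: "u \<noteq> v" using sg assms(4) by blast
  have wvz: "\<And>i. i \<in> {1..l} \<Longrightarrow> w i \<noteq> v \<and> z i \<noteq> u \<and> w i \<noteq> z i"
    using sg wuv wz by blast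
  have D1: "\<And>i j. i \<in> {1..l} \<Longrightarrow> j \<in> {1..l} \<Longrightarrow> (w i = w j) = (i = j)"
           "\<And>i j. i \<in> {1..l} \<Longrightarrow> j \<in> {1..l} \<Longrightarrow> (z i = z j) = (i = j)"
           "\<And>i j. i \<in> {1..l} \<Longrightarrow> j \<in> {1..l} \<Longrightarrow> w i \<noteq> z j"
           "\<And>i j. i \<in> {2..l} \<Longrightarrow> j \<in> {2..l} \<Longrightarrow> (x i = x j) = (i = j)"
           "\<And>i j. i \<in> {2..l} \<Longrightarrow> j \<in> {2..l} \<Longrightarrow> (y i = y j) = (i = j)"
           "\<And>i j. i \<in> {2..l} \<Longrightarrow> j \<in> {2..l} \<Longrightarrow> x i \<noteq> y j"
    using ww wvz xx xy by blast+
  have D2: "\<And>i j. i \<in> {2..l} \<Longrightarrow> j \<in> {1..l} \<Longrightarrow> x i \<noteq> w j \<and> x i \<noteq> z j \<and> y i \<noteq> w j \<and> y i \<noteq> z j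
             \<and> w j \<noteq> x i \<and> z j \<noteq> x i \<and> w j \<noteq> y i \<and> z j \<noteq> y i"
           "\<And>i. i \<in> {2..l} \<Longrightarrow> x i \<noteq> u \<and> x i \<noteq> v \<and> y i \<noteq> u \<and> y i \<noteq> v \<and> u \<noteq> x i \<and> v \<noteq> x i \<and> u \<noteq> y i \<and> v \<noteq> y i"
           "\<And>i. i \<in> {1..l} \<Longrightarrow> w i \<noteq> u \<and> w i \<noteq> v \<and> z i \<noteq> u \<and> z i \<noteq> v \<and> u \<noteq> w i \<and> v \<noteq> w i \<and> u \<noteq> z i \<and> v \<noteq> z i"
  proof -
    show "\<And>i j. i \<in> {2..l} \<Longrightarrow> j \<in> {1..l} \<Longrightarrow> x i \<noteq> w j \<and> x i \<noteq> z j \<and> y i \<noteq> w j \<and> y i \<noteq> z j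
             \<and> w j \<noteq> x i \<and> z j \<noteq> x i \<and> w j \<noteq> y i \<and> z j \<noteq> y i"
      using xF' by metis
    show "\<And>i. i \<in> {2..l} \<Longrightarrow> x i \<noteq> u \<and> x i \<noteq> v \<and> y i \<noteq> u \<and> y i \<noteq> v \<and> u \<noteq> x i \<and> v \<noteq> x i \<and> u \<noteq> y i \<and> v \<noteq> y i"
    proof -
      fix i assume "i \<in> {2..l}"
      moreover have "1 \<in> {1..l}" using assms(1) by simp
      ultimately show "x i \<noteq> u \<and> x i \<noteq> v \<and> y i \<noteq> u \<and> y i \<noteq> v \<and> u \<noteq> x i \<and> v \<noteq> x i \<and> u \<noteq> y i \<and> v \<noteq> y i"
        using xF'[of i 1] by metis
    qed
    show "\<And>i. i \<in> {1..l} \<Longrightarrow> w i \<noteq> u \<and> w i \<noteq> v \<and> z i \<noteq> u \<and> z i \<noteq> v \<and> u \<noteq> w i \<and> v \<noteq> w i \<and> u \<noteq> z i \<and> v \<noteq> z i"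
      using wvz wuv by metis
  qed
  have VV: "u \<in> V" "v \<in> V" "\<And>i. i \<in> {1..l} \<Longrightarrow> w i \<in> V \<and> z i \<in> V"
     "\<And>i. i \<in> {2..l} \<Longrightarrow> x i \<in> V \<and> y i \<in> V"
    using sg assms(4) wuv Px by blast+
  have RR: "E v u" using sg assms(4) by blast
  define a where "a k = (if k = 0 then v else if odd k then w ((k+1) div 2) else x (k div 2 + 1))" for k
  define b where "b k = (if k = 0 then u else if odd k then z ((k+1) div 2) else y (k div 2 + 1))" for k
  have a0: "a 0 = v" "b 0 = u" by (simp_all add: a_def b_def)
  have ao: "\<And>m. a (Suc (2*m)) = w (Suc m) \<and> b (Suc (2*m)) = z (Suc m)" by (simp add: a_def b_def)
  have ae: "\<And>m. m \<ge> 1 \<Longrightarrow> a (2*m) = x (Suc m) \<and> b (2*m) = y (Suc m)" by (simp add: a_def b_def)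
  have cons: "\<And>k P. k < 2*l \<Longrightarrow> (k = 0 \<Longrightarrow> P) \<Longrightarrow> (\<And>m. k = 2*m+1 \<Longrightarrow> m+1 \<in> {1..l} \<Longrightarrow> P)
      \<Longrightarrow> (\<And>m. k = 2*m \<Longrightarrow> m \<ge> 1 \<Longrightarrow> m+1 \<in> {2..l} \<Longrightarrow> P) \<Longrightarrow> P"
  proof -
    fix k P assume k: "k < 2*l" and c0: "k = 0 \<Longrightarrow> P"
      and c1: "\<And>m. k = 2*m+1 \<Longrightarrow> m+1 \<in> {1..l} \<Longrightarrow> P"
      and c2: "\<And>m. k = 2*m \<Longrightarrow> m \<ge> 1 \<Longrightarrow> m+1 \<in> {2..l} \<Longrightarrow> P"
    show P
    proof (cases "odd k")
      case True
      then obtain m where "k = 2*m+1" by (metis oddE)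
      then show P using c1 k by simp
    next
      case False
      then obtain m where m: "k = 2*m" by blast
      show P
      proof (cases "m = 0")
        case True then show P using c0 m by simp
      next
        case False then show P using c2 m k by simp
      qed
    qed
  qed
  have inja: "inj_on a {..<2*l}"
  proof (rule inj_onI)
    fix k k' assume k: "k \<in> {..<2*l}" "k' \<in> {..<2*l}" and eq: "a k = a k'"
    from k have k1: "k < 2*l" and k2: "k' < 2*l" by auto
    show "k = k'"
      by (insert eq uv, rule cons[OF k1]; rule cons[OF k2]; simp add: a0 ao ae D1 D2)
  qed
  have injb: "inj_on b {..<2*l}"
  proof (rule inj_onI)
    fix k k' assume k: "k \<in> {..<2*l}" "k' \<in> {..<2*l}" and eq: "b k = b k'"
    from k have k1: "k < 2*l" and k2: "k' < 2*l" by auto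
    show "k = k'"
      by (insert eq uv, rule cons[OF k1]; rule cons[OF k2]; simp add: a0 ao ae D1 D2)
  qed
  have disj: "a ` {..<2*l} \<inter> b ` {..<2*l} = {}"
  proof (rule ccontr)
    assume "a ` {..<2*l} \<inter> b ` {..<2*l} \<noteq> {}"
    then obtain k k' where k1: "k < 2*l" and k2: "k' < 2*l" and eq: "a k = b k'" by auto
    show False
      by (insert eq uv, rule cons[OF k1]; rule cons[OF k2]; simp add: a0 ao ae D1 D2)
  qed
  have inV: "\<And>k. k < 2*l \<Longrightarrow> a k \<in> V \<and> b k \<in> V"
  proof -
    fix k assume k: "k < 2*l"
    show "a k \<in> V \<and> b k \<in> V"
      by (rule cons[OF k]; simp add: a0 ao ae VV)
  qed
  have rung: "\<And>k. k < 2*l \<Longrightarrow> E (a k) (b k)"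
  proof -
    fix k assume k: "k < 2*l"
    show "E (a k) (b k)"
      by (rule cons[OF k]; simp add: a0 ao ae RR wz Px)
  qed
  have cyc: "\<And>k. k < 2*l \<Longrightarrow> E (a k) (a (Suc k mod (2*l))) \<and> E (b k) (b (Suc k mod (2*l)))"
  proof -
    fix k assume k: "k < 2*l"
    show "E (a k) (a (Suc k mod (2*l))) \<and> E (b k) (b (Suc k mod (2*l)))"
    proof (rule cons[OF k])
      assume "k = 0"
      moreover have "Suc 0 mod (2*l) = 2*0+1" using assms(1) by simp
      moreover have "(1::nat) \<in> {1..l}" using assms(1) by simp
      ultimately show ?thesis using wuv[of 1] a0 ao[of 0] by simp
    next
      fix m assume m: "k = 2*m+1" "m+1 \<in> {1..l}"
      show ?thesis
      proof (cases "m+1 = l")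
        case True
        then have "Suc k = 2*l" using m by simp
        then have "Suc k mod (2*l) = 0" by simp
        then show ?thesis using m True wuv[of l] sg a0 ao[of m] assms(1) by auto
      next
        case False
        then have "Suc k mod (2*l) = 2*(m+1)" using m by simp
        moreover have "m+2 \<in> {2..l}" using m False by auto
        ultimately show ?thesis using m Px[of "m+2"] ao[of m] ae[of "m+1"] by simp
      qed
    next
      fix m assume m: "k = 2*m" "m \<ge> 1" "m+1 \<in> {2..l}"
      then have "Suc k mod (2*l) = 2*m+1" by simp
      then show ?thesis using m Px[of "m+1"] ao[of m] ae[of m] by simp
    qed
  qed
  show ?thesis unfolding has_prism_copy_def
    apply (rule exI[of _ a], rule exI[of _ b])
    using inja injb disj inV rung cyc by blast
qed

end
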